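(* Let $\mathfrak{n}$ be a complex semisimple Lie algebra and $z\in\mathfrak{n}$ an element such that the adjoint operator $\operatorname{ad}(z)$ on $\mathfrak{n}$ has exactly three distinct eigenvalues $0,\alpha,\beta$. Then $\alpha+\beta=0$. *)

theory Defs
  imports Complex_Main
begin

text \<open>A complex Lie algebra: the underlying space is the whole type 'a, which is a
  complex vector space via the scalar multiplication sc; br is the Lie bracket.\<close>

definition lie_algebra :: "(complex \<Rightarrow> 'a::ab_group_add \<Rightarrow> 'a) \<Rightarrow> ('a \<Rightarrow> 'a \<Rightarrow> 'a) \<Rightarrow> bool" where
  "lie_algebra sc br \<longleftrightarrow>
     vector_space sc \<and>
     (\<forall>x y z. br (x + y) z = br x z + br y z) \<and>
     (\<forall>x y z. br x (y + z) = br x y + br x z) \<and>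
     (\<forall>c x y. br (sc c x) y = sc c (br x y)) \<and>
     (\<forall>c x y. br x (sc c y) = sc c (br x y)) \<and>
     (\<forall>x. br x x = 0) \<and>
     (\<forall>x y z. br x (br y z) + br y (br z x) + br z (br x y) = 0)"

definition fin_dim :: "(complex \<Rightarrow> 'a::ab_group_add \<Rightarrow> 'a) \<Rightarrow> bool" where
  "fin_dim sc \<longleftrightarrow> (\<exists>B. finite B \<and> module.span sc B = (UNIV :: 'a set))"

definition lie_ideal :: "(complex \<Rightarrow> 'a::ab_group_add \<Rightarrow> 'a) \<Rightarrow> ('a \<Rightarrow> 'a \<Rightarrow> 'a) \<Rightarrow> 'a set \<Rightarrow> bool" where
  "lie_ideal sc br I \<longleftrightarrow> module.subspace sc I \<and> (\<forall>x. \<forall>i\<in>I. br x i \<in> I)"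

fun derived :: "(complex \<Rightarrow> 'a::ab_group_add \<Rightarrow> 'a) \<Rightarrow> ('a \<Rightarrow> 'a \<Rightarrow> 'a) \<Rightarrow> 'a set \<Rightarrow> nat \<Rightarrow> 'a set" where
  "derived sc br I 0 = I"
| "derived sc br I (Suc k) =
     module.span sc {br a b | a b. a \<in> derived sc br I k \<and> b \<in> derived sc br I k}"

definition solvable_ideal :: "(complex \<Rightarrow> 'a::ab_group_add \<Rightarrow> 'a) \<Rightarrow> ('a \<Rightarrow> 'a \<Rightarrow> 'a) \<Rightarrow> 'a set \<Rightarrow> bool" where
  "solvable_ideal sc br I \<longleftrightarrow> (\<exists>k. derived sc br I k = {0})"

definition semisimple_lie_algebra :: "(complex \<Rightarrow> 'a::ab_group_add \<Rightarrow> 'a) \<Rightarrow> ('a \<Rightarrow> 'a \<Rightarrow> 'a) \<Rightarrow> bool" where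
  "semisimple_lie_algebra sc br \<longleftrightarrow>
     lie_algebra sc br \<and> fin_dim sc \<and>
     (\<forall>I. lie_ideal sc br I \<and> solvable_ideal sc br I \<longrightarrow> I = {0})"

definition ad_eigenvalues :: "(complex \<Rightarrow> 'a::ab_group_add \<Rightarrow> 'a) \<Rightarrow> ('a \<Rightarrow> 'a \<Rightarrow> 'a) \<Rightarrow> 'a \<Rightarrow> complex set" where
  "ad_eigenvalues sc br z = {c. \<exists>v. v \<noteq> 0 \<and> br z v = sc c v}"

end

theory Submission
  imports Defs "HOL-Computational_Algebra.Computational_Algebra"
begin

lemma aux_arith: "\<lbrakk>(\<alpha>::complex) \<noteq> 0; \<beta> * 2 = \<alpha>; \<alpha> * 2 = \<beta>\<rbrakk> \<Longrightarrow> False"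
proof -
  assume h: "\<alpha> \<noteq> 0" "\<beta> * 2 = \<alpha>" "\<alpha> * 2 = \<beta>"
  have "\<alpha> * 4 = (\<alpha> * 2) * 2" by simp
  also have "\<dots> = \<alpha>" using h by simp
  finally have "\<alpha> * 3 = 0" by (simp add: algebra_simps)
  then show False using h(1) by simp
qed

locale LA =
  fixes sc :: "complex \<Rightarrow> 'a::ab_group_add \<Rightarrow> 'a" and br :: "'a \<Rightarrow> 'a \<Rightarrow> 'a" and z :: 'a
  assumes LA: "lie_algebra sc br"
begin

sublocale vector_space sc using LA unfolding lie_algebra_def by simp

lemma addl: "br (x + y) w = br x w + br y w" using LA unfolding lie_algebra_def by blast
lemma addr: "br w (x + y) = br w x + br w y" using LA unfolding lie_algebra_def by blast
lemma scl: "br (sc c x) y = sc c (br x y)" using LA unfolding lie_algebra_def by blast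
lemma scr: "br x (sc c y) = sc c (br x y)" using LA unfolding lie_algebra_def by blast
lemma alt: "br x x = 0" using LA unfolding lie_algebra_def by blast
lemma jac: "br x (br y w) + br y (br w x) + br w (br x y) = 0" using LA unfolding lie_algebra_def by blast

lemma addR: "additive (br x)" by standard (rule addr)
lemma addL: "additive (\<lambda>x. br x y)" by standard (rule addl)

lemma br0l[simp]: "br 0 y = 0" using additive.zero[OF addL] by simp
lemma br0r[simp]: "br x 0 = 0" using additive.zero[OF addR] by simp
lemma brdiffl: "br (x - y) w = br x w - br y w" using additive.diff[OF addL] by simp
lemma brdiffr: "br w (x - y) = br w x - br w y" using additive.diff[OF addR] by simp
lemma brminusl: "br (- x) w = - br x w" using additive.minus[OF addL] by simp
lemma brminusr: "br w (- x) = - br w x" using additive.minus[OF addR] by simp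
lemma brsumr: "br w (sum f A) = (\<Sum>i\<in>A. br w (f i))" using additive.sum[OF addR] by simp

lemma anti: "br x y = - br y x"
proof -
  have "br x y + br y x = br (x+y) (x+y)" unfolding addl addr by (simp add: alt)
  then have h: "br x y + br y x = 0" by (simp only: alt)
  show ?thesis using h by (rule eq_neg_iff_add_eq_0[THEN iffD2])
qed

lemma deriv: "br z (br a b) = br (br z a) b + br a (br z b)"
proof -
  have "br z (br a b) + br a (br b z) + br b (br z a) = 0" by (rule jac)
  moreover have "br a (br b z) = - br a (br z b)" by (metis anti brminusr)
  moreover have "br b (br z a) = - br (br z a) b" by (metis anti)
  ultimately show ?thesis by (simp add: algebra_simps eq_neg_iff_add_eq_0)
qed

definition T :: "complex \<Rightarrow> 'a \<Rightarrow> 'a" where "T c v = br z v - sc c v"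

lemma T_add: "T c (x + y) = T c x + T c y" unfolding T_def by (simp add: addr algebra_simps)
lemma T_addv: "additive (T c)" by standard (rule T_add)
lemma T_0[simp]: "T c 0 = 0" using additive.zero[OF T_addv] .
lemma T_diff: "T c (x - y) = T c x - T c y" using additive.diff[OF T_addv] .
lemma T_sc: "T c (sc a x) = sc a (T c x)" unfolding T_def by (simp add: scr algebra_simps mult.commute)
lemma T_comm: "T c (T d v) = T d (T c v)"
  unfolding T_def by (simp add: brdiffr scr algebra_simps mult.commute)

lemma Tp_add: "(T c ^^ n) (x + y) = (T c ^^ n) x + (T c ^^ n) y"
  by (induct n) (simp_all add: T_add)
lemma Tp_0[simp]: "(T c ^^ n) 0 = 0" by (induct n) simp_all
lemma Tp_comm: "T d ((T c ^^ n) v) = (T c ^^ n) (T d v)"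
  by (induct n) (simp_all add: T_comm)
lemma Tp_sc: "(T c ^^ n) (sc a x) = sc a ((T c ^^ n) x)"
  by (induct n) (simp_all add: T_sc)
lemma Tp_addv: "additive (T c ^^ n)" by standard (rule Tp_add)
lemma Tp_diff: "(T c ^^ n) (x - y) = (T c ^^ n) x - (T c ^^ n) y"
  using additive.diff[OF Tp_addv] .

definition L :: "complex \<Rightarrow> 'a set" where "L c = {v. \<exists>n. (T c ^^ n) v = 0}"

lemma T_br: "T (m + n) (br a b) = br (T m a) b + br a (T n b)"
  unfolding T_def brdiffl brdiffr scl scr deriv scale_left_distrib by (simp add: diff_add_eq add_diff_eq diff_diff_eq2 add.assoc add.left_commute)

lemma Tp_Suc: "(T c ^^ Suc n) v = (T c ^^ n) (T c v)"
  by (simp add: funpow_Suc_right del: funpow.simps)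

lemma leib_aux: "(T m ^^ i) a = 0 \<Longrightarrow> (T n ^^ j) b = 0 \<Longrightarrow> (T (m+n) ^^ (i+j)) (br a b) = 0"
proof (induct "i+j" arbitrary: i j a b rule: less_induct)
  case less
  show ?case
  proof (cases i)
    case 0 then show ?thesis using less by simp
  next
    case (Suc i')
    show ?thesis
    proof (cases j)
      case 0 then show ?thesis using less by simp
    next
      case (Suc j')
      have e: "i + j = Suc (i' + j)" using \<open>i = Suc i'\<close> by simp
      have "(T (m+n) ^^ (i+j)) (br a b) = (T (m+n) ^^ (i'+j)) (T (m+n) (br a b))"
        unfolding e Tp_Suc ..
      also have "\<dots> = (T (m+n) ^^ (i'+j)) (br (T m a) b) + (T (m+n) ^^ (i'+j)) (br a (T n b))"
        by (simp add: T_br Tp_add)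
      also have "(T (m+n) ^^ (i'+j)) (br (T m a) b) = 0"
      proof -
        have "(T m ^^ i') (T m a) = 0" using less(2) \<open>i = Suc i'\<close> by (simp only: Tp_Suc)
        from less(1)[OF _ this less(3)] show ?thesis using e by simp
      qed
      also have "(T (m+n) ^^ (i'+j)) (br a (T n b)) = (T (m+n) ^^ (i+j')) (br a (T n b))"
        using \<open>i = Suc i'\<close> \<open>j = Suc j'\<close> by simp
      also have "\<dots> = 0"
      proof -
        have "(T n ^^ j') (T n b) = 0" using less(3) \<open>j = Suc j'\<close> by (simp only: Tp_Suc)
        from less(1)[OF _ less(2) this] show ?thesis using \<open>j = Suc j'\<close> by simp
      qed
      finally show ?thesis by simp
    qed
  qed
qed

lemma leib: "a \<in> L m \<Longrightarrow> b \<in> L n \<Longrightarrow> br a b \<in> L (m + n)"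
  unfolding L_def using leib_aux by blast

lemma L_sub: "subspace (L c)"
  unfolding subspace_def L_def
proof safe
  show "\<exists>n. (T c ^^ n) 0 = 0" by auto
next
  fix x y i j assume "(T c ^^ i) x = 0" "(T c ^^ j) y = 0"
  then have "(T c ^^ (i+j)) x = 0" "(T c ^^ (i+j)) y = 0"
    by (metis add.commute funpow_add o_apply Tp_0)+
  then show "\<exists>n. (T c ^^ n) (x + y) = 0" by (intro exI[of _ "i+j"]) (simp add: Tp_add)
next
  fix a x i assume "(T c ^^ i) x = 0"
  then show "\<exists>n. (T c ^^ n) (sc a x) = 0" by (auto simp: Tp_sc)
qed

definition E :: "complex set" where "E = {c. \<exists>v. v \<noteq> 0 \<and> br z v = sc c v}"

lemma L_trivial: "c \<notin> E \<Longrightarrow> v \<in> L c \<Longrightarrow> v = 0"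
proof -
  assume c: "c \<notin> E"
  have inj: "T c w = 0 \<Longrightarrow> w = 0" for w using c unfolding E_def T_def by auto
  have "(T c ^^ n) w = 0 \<Longrightarrow> w = 0" for n w
    by (induct n arbitrary: w) (auto simp: funpow_Suc_right simp del: funpow.simps dest: inj)
  then show "v \<in> L c \<Longrightarrow> v = 0" unfolding L_def by auto
qed

definition F :: "complex list \<Rightarrow> 'a \<Rightarrow> 'a" where "F xs v = foldr T xs v"

lemma F_simps[simp]: "F [] v = v" "F (c # xs) v = T c (F xs v)" unfolding F_def by simp_all
lemma F_comm: "T c (F xs v) = F xs (T c v)" by (induct xs) (simp_all add: T_comm)
lemma F_add: "F xs (x + y) = F xs x + F xs y" by (induct xs) (simp_all add: T_add)
lemma F_remove1: "c \<in> set xs \<Longrightarrow> F xs v = F (remove1 c xs) (T c v)"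
proof (induct xs arbitrary: v)
  case (Cons a xs)
  show ?case
  proof (cases "a = c")
    case True then show ?thesis by (simp add: F_comm)
  next
    case False
    then have "c \<in> set xs" using Cons by simp
    then show ?thesis using Cons(1)[of "T a v"] False by (simp add: F_comm T_comm)
  qed
qed simp
lemma F_const: "set xs \<subseteq> {c} \<Longrightarrow> F xs v = (T c ^^ length xs) v"
  by (induct xs) auto

lemma G: "F xs v = 0 \<Longrightarrow> v \<in> span (\<Union>c\<in>set xs. L c)"
proof (induct "length xs" arbitrary: xs v rule: less_induct)
  case less
  show ?case
  proof (cases "\<exists>l\<in>set xs. \<exists>m\<in>set xs. l \<noteq> m")
    case False
    show ?thesis
    proof (cases xs)
      case Nil then show ?thesis using less by simp
    next
      case (Cons c ys)
      with False have "set xs \<subseteq> {c}" by auto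
      with less(2) have "v \<in> L c" unfolding L_def by (auto simp: F_const)
      then show ?thesis using Cons by (auto intro: span_base)
    qed
  next
    case True
    then obtain l m where lm: "l \<in> set xs" "m \<in> set xs" "l \<noteq> m" by auto
    have S: "span (\<Union>c\<in>set (remove1 c xs). L c) \<subseteq> span (\<Union>c\<in>set xs. L c)" for c
      by (rule span_mono) (use set_remove1_subset in fastforce)
    have IH: "T c v \<in> span (\<Union>c\<in>set xs. L c)" if c: "c \<in> set xs" for c
    proof -
      have l1: "length (remove1 c xs) < length xs" using c
        using length_pos_if_in_set[OF c] by (simp add: length_remove1)
      have "F (remove1 c xs) (T c v) = 0" using F_remove1[of c xs v] c less(2) by simp
      from less(1)[OF l1 this] show ?thesis using S[of c] by blast
    qed
    have "T m v \<in> span (\<Union>c\<in>set xs. L c)" using IH lm by blast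
    moreover have "T l v \<in> span (\<Union>c\<in>set xs. L c)" using IH lm by blast
    ultimately have "sc (inverse (l - m)) (T m v - T l v) \<in> span (\<Union>c\<in>set xs. L c)"
      by (intro span_scale span_diff)
    moreover have "sc (inverse (l - m)) (T m v - T l v) = v"
    proof -
      have "T m v - T l v = sc (l - m) v" unfolding T_def by (simp add: algebra_simps)
      then show ?thesis using lm by simp
    qed
    ultimately show ?thesis by simp
  qed
qed


definition opev :: "complex poly \<Rightarrow> 'a \<Rightarrow> 'a" where
  "opev p v = (\<Sum>i\<le>degree p. sc (coeff p i) ((br z ^^ i) v))"

lemma opev_gen: "degree p \<le> N \<Longrightarrow> opev p v = (\<Sum>i\<le>N. sc (coeff p i) ((br z ^^ i) v))"
  unfolding opev_def by (rule sum.mono_neutral_left) (auto simp: coeff_eq_0)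

lemma opev_add: "opev (p + q) v = opev p v + opev q v"
proof -
  let ?N = "max (degree p) (degree q)"
  have "degree (p + q) \<le> ?N" by (rule degree_add_le) auto
  then show ?thesis
    by (simp add: opev_gen[of _ ?N] opev_gen[of p ?N] opev_gen[of q ?N] scale_left_distrib sum.distrib)
qed

lemma opev_smult: "opev (smult c p) v = sc c (opev p v)"
  by (simp add: opev_gen[OF degree_smult_le] opev_def scale_sum_right)

lemma opev_0[simp]: "opev 0 v = 0" unfolding opev_def by simp
lemma opev_1[simp]: "opev 1 v = v" unfolding opev_def by simp

lemma opev_minus: "opev (- p) v = - opev p v"
  using opev_smult[of "-1" p v] by simp

lemma opev_diff: "opev (p - q) v = opev p v - opev q v"
  using opev_add[of p "- q" v] by (simp add: opev_minus)

lemma opev_pCons0: "opev (pCons 0 q) v = br z (opev q v)"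
proof -
  have "opev (pCons 0 q) v = (\<Sum>i\<le>Suc (degree q). sc (coeff (pCons 0 q) i) ((br z ^^ i) v))"
    by (rule opev_gen[OF degree_pCons_le])
  also have "\<dots> = (\<Sum>i\<le>degree q. sc (coeff q i) ((br z ^^ Suc i) v))"
    by (subst sum.atMost_Suc_shift) simp
  also have "\<dots> = br z (opev q v)"
    by (simp add: opev_def brsumr scr)
  finally show ?thesis .
qed

lemma opev_lin: "opev ([:-r, 1:] * q) v = T r (opev q v)"
proof -
  have e: "[:-r, 1:] * q = smult (-r) q + pCons 0 q" by simp
  show ?thesis unfolding e opev_add opev_smult opev_pCons0 T_def by (simp add: algebra_simps)
qed

lemma opev_prod: "opev (prod_list (map (\<lambda>r. [:-r, 1:]) xs)) v = F xs v"
proof (induct xs)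
  case (Cons a xs)
  have "prod_list (map (\<lambda>r. [:-r, 1:]) (a # xs)) = [:-a, 1:] * prod_list (map (\<lambda>r. [:-r, 1:]) xs)" by simp
  then show ?case using Cons by (simp only: opev_lin F_simps)
qed simp

lemma opev_monom: "opev (monom c k) v = sc c ((br z ^^ k) v)"
  by (simp add: opev_gen[OF degree_monom_le] coeff_monom if_distrib[of "\<lambda>a. sc a _"] cong: if_cong)

lemma opev_sum: "opev (\<Sum>i\<in>A. p i) v = (\<Sum>i\<in>A. opev (p i) v)"
  by (induct A rule: infinite_finite_induct) (simp_all add: opev_add)

lemma split_poly: "(p::complex poly) \<noteq> 0 \<Longrightarrow> \<exists>c xs. c \<noteq> 0 \<and> p = smult c (prod_list (map (\<lambda>r. [:-r, 1:]) xs))"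
proof (induct "degree p" arbitrary: p rule: less_induct)
  case less
  show ?case
  proof (cases "degree p = 0")
    case True
    then have "p = [:coeff p 0:]" using degree_0_id by metis
    then show ?thesis using less(2) by (intro exI[of _ "coeff p 0"] exI[of _ "[]"]) auto
  next
    case False
    then have "\<not> constant (poly p)" by (simp add: constant_degree)
    then obtain r where "poly p r = 0" using fundamental_theorem_of_algebra by blast
    then obtain q where q: "p = [:-r, 1:] * q" using poly_eq_0_iff_dvd by (metis dvdE)
    with less(2) have q0: "q \<noteq> 0" by auto
    have "degree ([:-r, 1:] * q) = degree [:-r, 1:] + degree q"
      by (rule degree_mult_eq) (auto simp: q0)
    then have "degree p = degree q + 1" using q by simp
    then obtain c ys where "c \<noteq> 0" "q = smult c (prod_list (map (\<lambda>r. [:-r, 1:]) ys))"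
      using less(1)[OF _ q0] by auto
    then show ?thesis using q by (intro exI[of _ c] exI[of _ "r # ys"]) simp
  qed
qed

lemma span_image_sum: "finite A \<Longrightarrow> x \<in> span (f ` A) \<Longrightarrow> \<exists>c. x = (\<Sum>i\<in>A. sc (c i) (f i))"
proof (induct A arbitrary: x rule: finite_induct)
  case empty then show ?case by simp
next
  case (insert a A)
  then obtain k where "x - sc k (f a) \<in> span (f ` A)" using span_insert by auto
  with insert obtain c where c: "x - sc k (f a) = (\<Sum>i\<in>A. sc (c i) (f i))" by blast
  have "(\<Sum>i\<in>insert a A. sc ((c(a := k)) i) (f i)) = sc k (f a) + (\<Sum>i\<in>A. sc (c i) (f i))"
    using insert by (simp add: sum.insert) (intro sum.cong, auto)
  then show ?case using c by (intro exI[of _ "c(a := k)"]) (simp add: algebra_simps)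
qed


lemma annih:
  assumes fin: "fin_dim sc"
  shows "\<exists>xs. F xs v = 0"
proof -
  obtain B where B: "finite B" "span B = UNIV" using fin unfolding fin_dim_def by auto
  define f where "f i = (br z ^^ i) v" for i
  have "\<exists>k. f k \<in> span (f ` {..<k})"
  proof (rule ccontr)
    assume H0: "\<not> ?thesis"
    have H: "f k \<notin> span (f ` {..<k})" for k using H0 by blast
    have ind: "independent (f ` {..<k}) \<and> card (f ` {..<k}) = k" for k
    proof (induct k)
      case 0 show ?case by (simp add: independent_empty)
    next
      case (Suc k)
      have nin: "f k \<notin> f ` {..<k}" using H[of k] span_base by metis
      have e: "f ` {..<Suc k} = insert (f k) (f ` {..<k})" by (simp add: lessThan_Suc)
      have nsp: "f k \<notin> span (f ` {..<k})" by (rule H)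
      show ?case unfolding e using Suc nin nsp by (simp add: independent_insert card_insert_disjoint)
    qed
    from independent_span_bound[OF B(1), of "f ` {..<Suc (card B)}"] ind[of "Suc (card B)"] B(2)
    show False by simp
  qed
  then obtain k where "f k \<in> span (f ` {..<k})" by blast
  then obtain c where c: "f k = (\<Sum>i<k. sc (c i) (f i))" using span_image_sum[of "{..<k}"] by blast
  define p where "p = monom 1 k - (\<Sum>i<k. monom (c i) i)"
  have s0: "(\<Sum>i<k. coeff (monom (c i) i) k) = 0" by (rule sum.neutral) (auto simp: coeff_monom)
  have "coeff p k = 1" unfolding p_def by (simp add: coeff_diff coeff_sum s0)
  then have p0: "p \<noteq> 0" by auto
  have "opev p v = 0" unfolding p_def using c by (simp add: opev_diff opev_sum opev_monom f_def)
  moreover obtain a xs where "a \<noteq> 0" "p = smult a (prod_list (map (\<lambda>r. [:-r, 1:]) xs))"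
    using split_poly[OF p0] by blast
  ultimately have "F xs v = 0" by (simp add: opev_smult opev_prod)
  then show ?thesis by blast
qed

lemma span_all:
  assumes fin: "fin_dim sc" and ES: "E \<subseteq> S"
  shows "v \<in> span (\<Union>c\<in>S. L c)"
proof -
  obtain xs where "F xs v = 0" using annih[OF fin] by blast
  then have "v \<in> span (\<Union>c\<in>set xs. L c)" by (rule G)
  also have "\<dots> \<subseteq> span (insert 0 (\<Union>c\<in>S. L c))"
    by (rule span_mono) (use L_trivial ES in blast)
  also have "\<dots> = span (\<Union>c\<in>S. L c)" by (simp add: span_insert_0)
  finally show ?thesis .
qed

lemma bilin:
  assumes "x \<in> span A" "y \<in> span B" "subspace U" "\<And>a b. a \<in> A \<Longrightarrow> b \<in> B \<Longrightarrow> br a b \<in> U"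
  shows "br x y \<in> U"
proof -
  have inner: "br a y \<in> U" if a: "a \<in> A" for a
    using assms(2)
  proof (induct rule: span_induct_alt)
    case base then show ?case using assms(3) by (simp add: subspace_0)
  next
    case (step c x y) then show ?case using assms(3,4) a
      by (simp add: addr scr subspace_add subspace_scale)
  qed
  show ?thesis using assms(1)
  proof (induct rule: span_induct_alt)
    case base then show ?case using assms(3) by (simp add: subspace_0)
  next
    case (step c x y') then show ?case using assms(3) inner
      by (simp add: addl scl subspace_add subspace_scale)
  qed
qed

lemma L_nz: "a \<in> L c \<Longrightarrow> a \<noteq> 0 \<Longrightarrow> c \<in> E" using L_trivial by blast

lemma main:
  assumes ss: "\<forall>I. lie_ideal sc br I \<and> solvable_ideal sc br I \<longrightarrow> I = {0}"
    and fin: "fin_dim sc" and Eq: "E = {0, \<alpha>, \<beta>}"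
    and a0: "\<alpha> \<noteq> 0" and b0: "\<beta> \<noteq> 0" and ab: "\<alpha> \<noteq> \<beta>"
  shows "\<alpha> + \<beta> = 0"
proof (rule ccontr)
  assume apb: "\<alpha> + \<beta> \<noteq> 0"
  define I where "I = span (L \<alpha> \<union> L \<beta>)"
  have gen: "br a b \<in> U" if "a \<in> L c" "b \<in> L d" "subspace U" "a \<noteq> 0 \<Longrightarrow> b \<noteq> 0 \<Longrightarrow> c \<in> E \<Longrightarrow> d \<in> E \<Longrightarrow> c + d \<in> E \<Longrightarrow> L (c + d) \<subseteq> U"
    for a b c d U
  proof (cases "a = 0 \<or> b = 0 \<or> c + d \<notin> E")
    case True
    then show ?thesis using that L_trivial[of "c+d" "br a b"] leib[OF that(1,2)] subspace_0[OF that(3)]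
      by auto
  next
    case False
    then show ?thesis using that L_nz leib by blast
  qed
  have ideal: "lie_ideal sc br I"
    unfolding lie_ideal_def
  proof (intro conjI allI ballI)
    show "subspace I" unfolding I_def by simp
    fix x i assume i: "i \<in> I"
    have x: "x \<in> span (\<Union>c\<in>{0, \<alpha>, \<beta>}. L c)" by (rule span_all[OF fin]) (simp add: Eq)
    show "br x i \<in> I"
    proof (rule bilin[OF x i[unfolded I_def]])
      show "subspace I" unfolding I_def by simp
      fix a b assume a: "a \<in> (\<Union>c\<in>{0, \<alpha>, \<beta>}. L c)" and b: "b \<in> L \<alpha> \<union> L \<beta>"
      from a obtain c where c: "c \<in> {0, \<alpha>, \<beta>}" "a \<in> L c" by blast
      from b obtain d where d: "d \<in> {\<alpha>, \<beta>}" "b \<in> L d" by blast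
      show "br a b \<in> I"
      proof (rule gen[OF c(2) d(2)])
        show "subspace I" unfolding I_def by simp
        assume "c + d \<in> E"
        then have "c + d \<in> {\<alpha>, \<beta>}" using c d Eq a0 b0 apb by (auto simp: add.commute)
        then show "L (c + d) \<subseteq> I" unfolding I_def using span_superset by blast
      qed
    qed
  qed
  define J where "J = span (L (2*\<alpha>) \<union> L (2*\<beta>))"
  have D1: "derived sc br I (Suc 0) \<subseteq> J"
  proof -
    have "{br a b | a b. a \<in> I \<and> b \<in> I} \<subseteq> J"
    proof safe
      fix a b assume "a \<in> I" "b \<in> I"
      then show "br a b \<in> J" unfolding I_def
      proof (rule bilin)
        show "subspace J" unfolding J_def by simp
        fix a b assume a: "a \<in> L \<alpha> \<union> L \<beta>" and b: "b \<in> L \<alpha> \<union> L \<beta>"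
        from a obtain c where c: "c \<in> {\<alpha>, \<beta>}" "a \<in> L c" by blast
        from b obtain d where d: "d \<in> {\<alpha>, \<beta>}" "b \<in> L d" by blast
        show "br a b \<in> J"
        proof (rule gen[OF c(2) d(2)])
          show "subspace J" unfolding J_def by simp
          assume "c + d \<in> E"
          then have "c + d \<in> {2*\<alpha>, 2*\<beta>}" using c d Eq a0 b0 apb by (auto simp: add.commute)
          then have "L (c + d) \<subseteq> L (2*\<alpha>) \<union> L (2*\<beta>)" by auto
          then show "L (c + d) \<subseteq> J" unfolding J_def using span_superset by blast
        qed
      qed
    qed
    moreover have "subspace J" unfolding J_def by simp
    ultimately have "span {br a b | a b. a \<in> I \<and> b \<in> I} \<subseteq> J" by (rule span_minimal)
    then show ?thesis by simp
  qed
  have D2: "derived sc br I (Suc (Suc 0)) = {0}"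
  proof -
    have "{br a b | a b. a \<in> derived sc br I (Suc 0) \<and> b \<in> derived sc br I (Suc 0)} \<subseteq> {0}"
    proof safe
      fix a b assume "a \<in> derived sc br I (Suc 0)" "b \<in> derived sc br I (Suc 0)"
      then have "a \<in> J" "b \<in> J" using D1 by auto
      then have "br a b \<in> {0}" unfolding J_def
      proof (rule bilin)
        show "subspace {0}" by simp
        fix a b assume a: "a \<in> L (2*\<alpha>) \<union> L (2*\<beta>)" and b: "b \<in> L (2*\<alpha>) \<union> L (2*\<beta>)"
        from a obtain c where c: "c \<in> {2*\<alpha>, 2*\<beta>}" "a \<in> L c" by blast
        from b obtain d where d: "d \<in> {2*\<alpha>, 2*\<beta>}" "b \<in> L d" by blast
        have "br a b \<in> {0}"
        proof (rule gen[OF c(2) d(2)])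
          assume "c \<in> E" "d \<in> E" "c + d \<in> E"
          then have "c \<in> {0,\<alpha>,\<beta>}" "d \<in> {0,\<alpha>,\<beta>}" "c + d \<in> {0,\<alpha>,\<beta>}" using Eq by simp_all
          then have False using c(1) d(1) a0 b0 ab apb
            apply (simp only: insert_iff empty_iff)
            apply (elim disjE)
            apply (simp_all add: algebra_simps)
            apply (metis aux_arith)
            done
          then show "L (c + d) \<subseteq> {0}" by blast
        qed simp
        then show "br a b \<in> {0}" by simp
      qed
      then show "br a b = 0" by simp
    qed
    then have "span {br a b | a b. a \<in> derived sc br I (Suc 0) \<and> b \<in> derived sc br I (Suc 0)} \<subseteq> {0}"
      by (rule span_minimal) simp
    then have "derived sc br I (Suc (Suc 0)) \<subseteq> {0}" by (simp only: derived.simps(2))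
    moreover have "0 \<in> derived sc br I (Suc (Suc 0))" by (simp only: derived.simps(2) span_zero)
    ultimately show ?thesis by blast
  qed
  have "I = {0}" using ss ideal D2 unfolding solvable_ideal_def by blast
  moreover obtain v where "v \<noteq> 0" "br z v = sc \<alpha> v" using Eq unfolding E_def by blast
  then have "v \<in> L \<alpha>" "v \<noteq> 0" unfolding L_def T_def by (auto intro: exI[of _ 1])
  then have "v \<in> I" "v \<noteq> 0" unfolding I_def using span_superset by blast+
  ultimately show False by blast
qed

end

theorem lemma3p4:
  fixes sc :: "complex \<Rightarrow> 'a::ab_group_add \<Rightarrow> 'a"
    and br :: "'a \<Rightarrow> 'a \<Rightarrow> 'a"
    and z :: 'a
    and \<alpha> \<beta> :: complex
  assumes "semisimple_lie_algebra sc br"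
    and "ad_eigenvalues sc br z = {0, \<alpha>, \<beta>}"
    and "\<alpha> \<noteq> 0" and "\<beta> \<noteq> 0" and "\<alpha> \<noteq> \<beta>"
  shows "\<alpha> + \<beta> = 0"
proof -
  interpret LA sc br z using assms(1) unfolding semisimple_lie_algebra_def by unfold_locales simp
  show ?thesis
  proof (rule main)
    show "\<forall>I. lie_ideal sc br I \<and> solvable_ideal sc br I \<longrightarrow> I = {0}" "fin_dim sc"
      using assms(1) unfolding semisimple_lie_algebra_def by auto
    show "E = {0, \<alpha>, \<beta>}" using assms(2) unfolding E_def ad_eigenvalues_def by simp
  qed (use assms in auto)
qed

end
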